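(* Let $G$ be a finite simple undirected graph, $r<s$ positive integers, and run set-k on $(G,r,s)$. For every positive integer $k$ for which the transition time $t_k$ is defined, every $k$-$(r,s)$-nucleus $\mathcal{S}$ of $G$ satisfies $\mathcal{S}\subseteq\mathcal{S}_{t_k}$.
   Context: A $K_r$ is an $r$-clique of $G$. For a set $\mathcal{S}$ of $K_s$s: $K_r(\mathcal{S})$ is the set of $K_r$s contained in some member of $\mathcal{S}$; the $\mathcal{S}$-degree of $R\in K_r(\mathcal{S})$ is the number of $S\in\mathcal{S}$ containing $R$; $R,R'$ are $\mathcal{S}$-connected if there is a sequence $R=R_1,\dots,R_m=R'$ in $K_r(\mathcal{S})$ with each $R_i\cup R_{i+1}$ contained in some $S\in\mathcal{S}$. A $k$-$(r,s)$-nucleus is a set $\mathcal{S}$ of $K_s$s, maximal under inclusion among those such that every $R\in K_r(\mathcal{S})$ has $\mathcal{S}$-degree $\ge k$ and any two members of $K_r(\mathcal{S})$ are $\mathcal{S}$-connected. Procedure set-k$(G,r,s)$: enumerate all $K_r$s and $K_s$s; initialize $\delta(R)$ to the number of $K_s$s containing $R$; all $K_r$s unprocessed. Repeat until all processed: pick an unprocessed $K_r$ $R$ with minimum current $\delta(R)$ (ties arbitrary); set $\kappa(R)=\delta(R)$; for each $K_s$ $S\ni R$ such that no $K_r\subset S$ is processed, and for each $K_r$ $R'\subset S$, $R'\neq R$, with $\delta(R')>\delta(R)$, decrease $\delta(R')$ by 1; mark $R$ processed. $R_i$ is the $i$-th processed $K_r$; "time $t$" is the beginning of the iteration processing $R_t$.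 The transition time $t_k$ is the unique index with $\kappa(R_{t_k})=k$ and ($t_k=1$ or $\kappa(R_{t_k-1})<k$). $\mathcal{S}_t$ is the set of $K_s$s all of whose $K_r$s are unprocessed at time $t$. *)

theory Defs
  imports Main
begin

definition simple_graph :: "'a set \<Rightarrow> ('a \<Rightarrow> 'a \<Rightarrow> bool) \<Rightarrow> bool" where
  "simple_graph V E \<longleftrightarrow> finite V \<and> (\<forall>x y. E x y \<longrightarrow> E y x) \<and> (\<forall>x. \<not> E x x)
     \<and> (\<forall>x y. E x y \<longrightarrow> x \<in> V \<and> y \<in> V)"

definition cliques :: "'a set \<Rightarrow> ('a \<Rightarrow> 'a \<Rightarrow> bool) \<Rightarrow> nat \<Rightarrow> 'a set set" where
  "cliques V E r = {C. C \<subseteq> V \<and> card C = r \<and> (\<forall>x\<in>C. \<forall>y\<in>C. x \<noteq> y \<longrightarrow> E x y)}"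

text \<open>A run of set-k is encoded by the list rs of K_r's in processing order
  (rs ! t is the (t+1)-th processed K_r, indices are 0-based).
  delta V E r s rs t R is the value of delta(R) at the beginning of the
  iteration processing rs ! t.  Inside one iteration, delta(R') is decremented
  once per qualifying K_s as long as delta(R') > delta(R); hence the max.\<close>
fun delta :: "'a set \<Rightarrow> ('a \<Rightarrow> 'a \<Rightarrow> bool) \<Rightarrow> nat \<Rightarrow> nat \<Rightarrow> 'a set list \<Rightarrow> nat \<Rightarrow> 'a set \<Rightarrow> nat" where
  "delta V E r s rs 0 R = card {S \<in> cliques V E s. R \<subseteq> S}"
| "delta V E r s rs (Suc t) R' =
     (let R = rs ! t;
          d = delta V E r s rs t;
          c = card {S \<in> cliques V E s. R \<subseteq> S \<and> R' \<subseteq> S \<and>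
                       (\<forall>Q \<in> set (take t rs). \<not> Q \<subseteq> S)}
      in if R' \<noteq> R \<and> d R' > d R then max (d R) (d R' - c) else d R')"

definition setk_run :: "'a set \<Rightarrow> ('a \<Rightarrow> 'a \<Rightarrow> bool) \<Rightarrow> nat \<Rightarrow> nat \<Rightarrow> 'a set list \<Rightarrow> bool" where
  "setk_run V E r s rs \<longleftrightarrow> distinct rs \<and> set rs = cliques V E r \<and>
     (\<forall>t < length rs. \<forall>R \<in> set (drop t rs). delta V E r s rs t (rs ! t) \<le> delta V E r s rs t R)"

definition kappa :: "'a set \<Rightarrow> ('a \<Rightarrow> 'a \<Rightarrow> bool) \<Rightarrow> nat \<Rightarrow> nat \<Rightarrow> 'a set list \<Rightarrow> nat \<Rightarrow> nat" where
  "kappa V E r s rs t = delta V E r s rs t (rs ! t)"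

text \<open>t is the (0-based) transition time t_k.\<close>
definition transition_time :: "'a set \<Rightarrow> ('a \<Rightarrow> 'a \<Rightarrow> bool) \<Rightarrow> nat \<Rightarrow> nat \<Rightarrow> 'a set list \<Rightarrow> nat \<Rightarrow> nat \<Rightarrow> bool" where
  "transition_time V E r s rs k t \<longleftrightarrow> t < length rs \<and> kappa V E r s rs t = k \<and>
     (t = 0 \<or> kappa V E r s rs (t - 1) < k)"

definition S_at :: "'a set \<Rightarrow> ('a \<Rightarrow> 'a \<Rightarrow> bool) \<Rightarrow> nat \<Rightarrow> nat \<Rightarrow> 'a set list \<Rightarrow> nat \<Rightarrow> 'a set set" where
  "S_at V E r s rs t = {S \<in> cliques V E s. \<forall>Q \<in> set (take t rs). \<not> Q \<subseteq> S}"

definition Kr_of :: "nat \<Rightarrow> 'a set set \<Rightarrow> 'a set set" where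
  "Kr_of r SS = {R. card R = r \<and> (\<exists>S \<in> SS. R \<subseteq> S)}"

definition sdeg :: "'a set set \<Rightarrow> 'a set \<Rightarrow> nat" where
  "sdeg SS R = card {S \<in> SS. R \<subseteq> S}"

definition s_step :: "nat \<Rightarrow> 'a set set \<Rightarrow> 'a set \<Rightarrow> 'a set \<Rightarrow> bool" where
  "s_step r SS R R' \<longleftrightarrow> R \<in> Kr_of r SS \<and> R' \<in> Kr_of r SS \<and> (\<exists>S \<in> SS. R \<union> R' \<subseteq> S)"

definition s_connected :: "nat \<Rightarrow> 'a set set \<Rightarrow> 'a set \<Rightarrow> 'a set \<Rightarrow> bool" where
  "s_connected r SS R R' \<longleftrightarrow> (s_step r SS)\<^sup>*\<^sup>* R R'"

definition nucleus_cond :: "'a set \<Rightarrow> ('a \<Rightarrow> 'a \<Rightarrow> bool) \<Rightarrow> nat \<Rightarrow> nat \<Rightarrow> nat \<Rightarrow> 'a set set \<Rightarrow> bool" where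
  "nucleus_cond V E r s k SS \<longleftrightarrow> SS \<subseteq> cliques V E s \<and>
     (\<forall>R \<in> Kr_of r SS. sdeg SS R \<ge> k) \<and>
     (\<forall>R \<in> Kr_of r SS. \<forall>R' \<in> Kr_of r SS. s_connected r SS R R')"

definition is_nucleus :: "'a set \<Rightarrow> ('a \<Rightarrow> 'a \<Rightarrow> bool) \<Rightarrow> nat \<Rightarrow> nat \<Rightarrow> nat \<Rightarrow> 'a set set \<Rightarrow> bool" where
  "is_nucleus V E r s k SS \<longleftrightarrow> nucleus_cond V E r s k SS \<and>
     (\<forall>TT. nucleus_cond V E r s k TT \<and> SS \<subseteq> TT \<longrightarrow> TT = SS)"

end

theory Submission
  imports Defs
begin

definition degt where
  "degt V E r s rs t R = card {S \<in> S_at V E r s rs t. R \<subseteq> S}"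

lemma fin_cl: "finite V \<Longrightarrow> finite (cliques V E s)"
  unfolding cliques_def by (rule finite_subset[of _ "Pow V"]) auto

lemma S_at_Suc: "t < length rs \<Longrightarrow>
  S_at V E r s rs (Suc t) = {S \<in> S_at V E r s rs t. \<not> rs ! t \<subseteq> S}"
  unfolding S_at_def by (auto simp: take_Suc_conv_app_nth)

lemma inv:
  assumes fin: "finite V"
  shows "t \<le> length rs \<Longrightarrow> degt V E r s rs t R' \<le> delta V E r s rs t R'"
proof (induction t arbitrary: R')
  case 0
  then show ?case by (simp add: degt_def S_at_def)
next
  case (Suc t)
  have lt: "t < length rs" using Suc.prems by simp
  define R where "R = rs ! t"
  define d where "d = delta V E r s rs t"
  define A where "A = {S \<in> S_at V E r s rs t. R' \<subseteq> S}"
  define B where "B = {S \<in> A. R \<subseteq> S}"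
  have finA: "finite A" unfolding A_def S_at_def using fin_cl[OF fin] by auto
  have cB: "{S \<in> cliques V E s. R \<subseteq> S \<and> R' \<subseteq> S \<and> (\<forall>Q \<in> set (take t rs). \<not> Q \<subseteq> S)} = B"
    unfolding B_def A_def S_at_def by auto
  have dA: "degt V E r s rs t R' = card A" unfolding degt_def A_def by simp
  have dS: "degt V E r s rs (Suc t) R' = card (A - B)"
    unfolding degt_def S_at_Suc[OF lt] A_def B_def R_def
    by (rule arg_cong[where f=card]) auto
  have cAB: "card (A - B) = card A - card B"
    by (rule card_Diff_subset) (use finA in \<open>auto simp: B_def intro: finite_subset\<close>)
  have IH: "card A \<le> d R'" using Suc.IH[of R'] lt dA d_def by simp
  have eq: "delta V E r s rs (Suc t) R' =
     (if R' \<noteq> R \<and> d R' > d R then max (d R) (d R' - card B) else d R')"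
    by (simp add: R_def d_def cB[unfolded R_def] Let_def)
  have sub: "card (A - B) \<le> card A" using finA by (simp add: card_mono)
  show ?case
  proof (cases "R' \<noteq> R \<and> d R' > d R")
    case True
    then show ?thesis using eq dS cAB IH by auto
  next
    case False
    then show ?thesis using eq dS IH sub by auto
  qed
qed

lemma kappa_mono_step:
  assumes run: "setk_run V E r s rs" and lt: "Suc t < length rs"
  shows "kappa V E r s rs t \<le> kappa V E r s rs (Suc t)"
proof -
  define R where "R = rs ! t"
  define R' where "R' = rs ! Suc t"
  define d where "d = delta V E r s rs t"
  have "R' \<in> set (drop t rs)" unfolding R'_def using lt
    by (simp add: in_set_conv_nth) (metis Suc_diff_le Suc_lessD Suc_less_eq diff_Suc_1 le_add_diff_inverse lessI less_or_eq_imp_le nat_add_left_cancel_less zero_less_diff)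
  hence le: "d R \<le> d R'" using run lt unfolding setk_run_def R_def d_def by auto
  have "delta V E r s rs (Suc t) R' \<ge> d R"
    using le by (auto simp: R_def d_def Let_def)
  thus ?thesis unfolding kappa_def R'_def d_def R_def by simp
qed

lemma kappa_mono:
  assumes run: "setk_run V E r s rs" and "j < length rs" and "i \<le> j"
  shows "kappa V E r s rs i \<le> kappa V E r s rs j"
  using assms(3,2)
proof (induction j)
  case 0 then show ?case by simp
next
  case (Suc j)
  show ?case
  proof (cases "i = Suc j")
    case True then show ?thesis by simp
  next
    case False
    then have "kappa V E r s rs i \<le> kappa V E r s rs j" using Suc by simp
    also have "\<dots> \<le> kappa V E r s rs (Suc j)" using kappa_mono_step[OF run] Suc.prems by simp
    finally show ?thesis .
  qed
qed

theorem claim3: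
  fixes V :: "'a set" and E :: "'a \<Rightarrow> 'a \<Rightarrow> bool" and r s k t :: nat
    and rs :: "'a set list" and SS :: "'a set set"
  assumes "simple_graph V E"
    and "0 < r" and "r < s"
    and "setk_run V E r s rs"
    and "0 < k"
    and "transition_time V E r s rs k t"
    and "is_nucleus V E r s k SS"
  shows "SS \<subseteq> S_at V E r s rs t"
proof (rule ccontr)
  have fin: "finite V" using assms(1) by (simp add: simple_graph_def)
  have run: "setk_run V E r s rs" by fact
  have tt: "t < length rs" "kappa V E r s rs t = k" "t = 0 \<or> kappa V E r s rs (t - 1) < k"
    using assms(6) unfolding transition_time_def by auto
  have nc: "SS \<subseteq> cliques V E s" "\<forall>R \<in> Kr_of r SS. sdeg SS R \<ge> k"
    using assms(7) unfolding is_nucleus_def nucleus_cond_def by auto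
  assume "\<not> SS \<subseteq> S_at V E r s rs t"
  then obtain S0 Q where S0: "S0 \<in> SS" "Q \<in> set (take t rs)" "Q \<subseteq> S0"
    using nc(1) unfolding S_at_def by auto
  then obtain i where i: "i < t" "rs ! i \<subseteq> S0"
    by (metis in_set_conv_nth length_take min_less_iff_conj nth_take)
  define P where "P = (\<lambda>j. j < t \<and> (\<exists>S \<in> SS. rs ! j \<subseteq> S))"
  have Pi: "P i" using i S0 unfolding P_def by auto
  define j where "j = (LEAST j. P j)"
  have Pj: "P j" using LeastI[of P, OF Pi] j_def by simp
  have minj: "\<And>l. l < j \<Longrightarrow> \<not> P l" using not_less_Least j_def by blast
  have jt: "j < t" using Pj P_def by simp
  have t0: "t \<noteq> 0" using jt by simp
  have SSsub: "SS \<subseteq> S_at V E r s rs j"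
  proof
    fix S assume S: "S \<in> SS"
    { fix Q assume "Q \<in> set (take j rs)" "Q \<subseteq> S"
      then obtain l where "l < j" "rs ! l = Q"
        by (metis in_set_conv_nth length_take min_less_iff_conj nth_take)
      hence "P l" using S \<open>Q \<subseteq> S\<close> jt unfolding P_def by auto
      hence False using minj \<open>l < j\<close> by blast }
    thus "S \<in> S_at V E r s rs j" using S nc(1) unfolding S_at_def by auto
  qed
  define R where "R = rs ! j"
  obtain S1 where S1: "S1 \<in> SS" "R \<subseteq> S1" using Pj R_def P_def by auto
  have "R \<in> set rs" using jt tt(1) R_def by simp
  hence "R \<in> cliques V E r" using run unfolding setk_run_def by auto
  hence "card R = r" unfolding cliques_def by simp
  hence "R \<in> Kr_of r SS" using S1 unfolding Kr_of_def by auto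
  hence "k \<le> sdeg SS R" using nc(2) by auto
  also have "\<dots> \<le> degt V E r s rs j R" unfolding sdeg_def degt_def
    apply (rule card_mono)
    using fin_cl[OF fin] apply (auto simp: S_at_def)[1]
    using SSsub by auto
  also have "\<dots> \<le> kappa V E r s rs j" unfolding kappa_def R_def
    using inv[OF fin, of j rs] jt tt(1) R_def by simp
  also have "\<dots> \<le> kappa V E r s rs (t - 1)"
    using kappa_mono[OF run, of "t-1" j] jt tt(1) by simp
  finally show False using tt(3) t0 by simp
qed

end
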